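(* For every integer $n\ge1$, $\|[\mathcal D,\pi(K^nL^n)]\|=1$.
   Context: $\Omega=\{0,1\}^{\mathbb N}$ with the shift $\sigma$; for $a\in\{0,1\}$, $ax=(a,x_1,\dots)$. $\mu$ is the measure of maximal entropy (uniform Bernoulli product measure), $L^2(\mu)$ the Hilbert space of square-integrable functions. Ruelle operator $L\phi(x)=\frac12(\phi(0x)+\phi(1x))$; Koopman operator $K\phi=\phi\circ\sigma$. On $\mathcal H=L^2(\mu)\times L^2(\mu)$ (norm $|(\phi_1,\phi_2)|^2=|\phi_1|^2+|\phi_2|^2$), $\mathcal D=\begin{pmatrix}0&K\\ L&0\end{pmatrix}$, $\pi(A)=\begin{pmatrix}A&0\\0&A\end{pmatrix}$ for bounded $A$ on $L^2(\mu)$, $[\mathcal D,\pi(A)]=\mathcal D\pi(A)-\pi(A)\mathcal D$; $\|\cdot\|$ is the operator norm. *)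

theory Defs
  imports "HOL-Probability.Probability"
begin

text \<open>Omega = {0,1}^N rendered as nat => bool (coordinates indexed from 0).\<close>
type_synonym omega = "nat \<Rightarrow> bool"
type_synonym fn = "omega \<Rightarrow> real"

text \<open>Measure of maximal entropy: uniform Bernoulli product measure.\<close>
definition mu :: "omega measure" where
  "mu = PiM UNIV (\<lambda>_. measure_pmf (bernoulli_pmf (1/2)))"

definition shift :: "omega \<Rightarrow> omega" where
  "shift x = (\<lambda>n. x (Suc n))"

definition prepend :: "bool \<Rightarrow> omega \<Rightarrow> omega" where
  "prepend a x = case_nat a x"

definition Ruelle :: "fn \<Rightarrow> fn" where
  "Ruelle \<phi> = (\<lambda>x. (\<phi> (prepend False x) + \<phi> (prepend True x)) / 2)"

definition Koopman :: "fn \<Rightarrow> fn" where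
  "Koopman \<phi> = \<phi> \<circ> shift"

text \<open>Square-integrable functions (representatives of elements of L^2(mu)) and the L^2 norm.\<close>
definition sq_int :: "fn \<Rightarrow> bool" where
  "sq_int \<phi> \<longleftrightarrow> \<phi> \<in> borel_measurable mu \<and> integrable mu (\<lambda>x. (\<phi> x)\<^sup>2)"

definition L2norm :: "fn \<Rightarrow> real" where
  "L2norm \<phi> = sqrt (\<integral>x. (\<phi> x)\<^sup>2 \<partial>mu)"

definition Hnorm :: "fn \<times> fn \<Rightarrow> real" where
  "Hnorm p = sqrt ((L2norm (fst p))\<^sup>2 + (L2norm (snd p))\<^sup>2)"

definition opnormH :: "(fn \<times> fn \<Rightarrow> fn \<times> fn) \<Rightarrow> real" where
  "opnormH T = Sup {Hnorm (T p) | p. sq_int (fst p) \<and> sq_int (snd p) \<and> Hnorm p \<le> 1}"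

definition Dirac :: "fn \<times> fn \<Rightarrow> fn \<times> fn" where
  "Dirac p = (Koopman (snd p), Ruelle (fst p))"

definition piop :: "(fn \<Rightarrow> fn) \<Rightarrow> fn \<times> fn \<Rightarrow> fn \<times> fn" where
  "piop A p = (A (fst p), A (snd p))"

definition commutator :: "(fn \<times> fn \<Rightarrow> fn \<times> fn) \<Rightarrow> (fn \<times> fn \<Rightarrow> fn \<times> fn) \<Rightarrow> fn \<times> fn \<Rightarrow> fn \<times> fn" where
  "commutator T S p = (\<lambda>x. fst (T (S p)) x - fst (S (T p)) x, \<lambda>x. snd (T (S p)) x - snd (S (T p)) x)"

end

theory Submission
  imports Defs
begin

abbreviation BB :: "bool measure" where "BB \<equiv> measure_pmf (bernoulli_pmf (1/2))"

lemma seqsp: "sequence_space BB"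
  by (simp add: sequence_space_def product_prob_space_def product_sigma_finite_def
       product_prob_space_axioms_def prob_space_measure_pmf prob_space_imp_sigma_finite)

lemma sets_mu: "sets mu = sets (PiM UNIV (\<lambda>_. BB))" by (simp add: mu_def)

lemma shift_meas: "shift \<in> measurable mu mu"
  unfolding mu_def shift_def
  by (rule measurable_PiM_single') (auto simp: space_PiM)

lemma prepend_meas: "prepend a \<in> measurable mu mu"
  unfolding mu_def prepend_def
  by (rule measurable_PiM_single') (auto simp: space_PiM split: nat.split)

lemma space_mu: "space mu = UNIV" by (simp add: mu_def space_PiM)

lemma Koopman_meas: "f \<in> borel_measurable mu \<Longrightarrow> Koopman f \<in> borel_measurable mu"
  unfolding Koopman_def by (rule measurable_comp[OF shift_meas])

lemma Ruelle_meas: "f \<in> borel_measurable mu \<Longrightarrow> Ruelle f \<in> borel_measurable mu"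
  unfolding Ruelle_def
  using measurable_comp[OF prepend_meas[of False], of f] measurable_comp[OF prepend_meas[of True], of f]
  by (auto simp: o_def intro!: borel_measurable_divide borel_measurable_add)

lemma iter: "distr (BB \<Otimes>\<^sub>M mu) mu (\<lambda>(s, \<omega>). prepend s \<omega>) = mu"
  unfolding mu_def prepend_def using sequence_space.PiM_iter[OF seqsp] by simp

lemma nn_pair: assumes f: "f \<in> borel_measurable mu"
  shows "(\<integral>\<^sup>+x. ennreal (f x) \<partial>mu) = (\<integral>\<^sup>+\<omega>. (\<integral>\<^sup>+s. ennreal (f (prepend s \<omega>)) \<partial>BB) \<partial>mu)"
proof -
  interpret P: pair_sigma_finite BB mu
    by (simp add: pair_sigma_finite_def mu_def prob_space_imp_sigma_finite prob_space_measure_pmf prob_space_PiM)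
  have m: "(\<lambda>(s, \<omega>). prepend s \<omega>) \<in> measurable (BB \<Otimes>\<^sub>M mu) mu"
    unfolding mu_def prepend_def
  proof (rule measurable_PiM_single')
    fix i :: nat
    show "(\<lambda>\<omega>. (case \<omega> of (x, xa) \<Rightarrow> case_nat x xa) i) \<in> measurable (BB \<Otimes>\<^sub>M Pi\<^sub>M UNIV (\<lambda>_. BB)) BB"
    proof (cases i)
      case 0 then show ?thesis by (simp add: case_prod_beta)
    next
      case (Suc j) then show ?thesis by (simp add: case_prod_beta)
    qed
  qed (auto simp: space_PiM)
  have "(\<integral>\<^sup>+x. ennreal (f x) \<partial>mu) = (\<integral>\<^sup>+x. ennreal (f x) \<partial>distr (BB \<Otimes>\<^sub>M mu) mu (\<lambda>(s, \<omega>). prepend s \<omega>))"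
    by (simp add: iter)
  also have "\<dots> = (\<integral>\<^sup>+p. ennreal (f (case p of (s, \<omega>) \<Rightarrow> prepend s \<omega>)) \<partial>(BB \<Otimes>\<^sub>M mu))"
    by (rule nn_integral_distr[OF m]) (use f in simp)
  also have "\<dots> = (\<integral>\<^sup>+\<omega>. (\<integral>\<^sup>+s. ennreal (f (prepend s \<omega>)) \<partial>BB) \<partial>mu)"
    by (subst P.nn_integral_snd[symmetric]) (use m f in \<open>auto simp: case_prod_beta\<close>)
  finally show ?thesis .
qed

lemma shift_prepend[simp]: "shift (prepend s w) = w"
  by (simp add: shift_def prepend_def)

lemma prepend_shift: "prepend (x 0) (shift x) = x"
  unfolding shift_def prepend_def by (rule ext) (simp split: nat.split)

lemma nn_Koopman: assumes f: "f \<in> borel_measurable mu"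
  shows "(\<integral>\<^sup>+x. ennreal (Koopman f x) \<partial>mu) = (\<integral>\<^sup>+x. ennreal (f x) \<partial>mu)"
proof -
  interpret prob_space BB by (rule prob_space_measure_pmf)
  have "(\<integral>\<^sup>+x. ennreal (Koopman f x) \<partial>mu) = (\<integral>\<^sup>+\<omega>. (\<integral>\<^sup>+s. ennreal (Koopman f (prepend s \<omega>)) \<partial>BB) \<partial>mu)"
    by (rule nn_pair[OF Koopman_meas[OF f]])
  also have "\<dots> = (\<integral>\<^sup>+\<omega>. ennreal (f \<omega>) \<partial>mu)"
    by (simp add: Koopman_def measure_pmf.emeasure_space_1)
  finally show ?thesis .
qed

lemma nn_Ruelle: assumes f: "f \<in> borel_measurable mu" and nn: "\<And>x. 0 \<le> f x"
  shows "(\<integral>\<^sup>+x. ennreal (Ruelle f x) \<partial>mu) = (\<integral>\<^sup>+x. ennreal (f x) \<partial>mu)"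
proof -
  have "(\<integral>\<^sup>+x. ennreal (f x) \<partial>mu) = (\<integral>\<^sup>+\<omega>. (\<integral>\<^sup>+s. ennreal (f (prepend s \<omega>)) \<partial>BB) \<partial>mu)"
    by (rule nn_pair[OF f])
  also have "\<dots> = (\<integral>\<^sup>+\<omega>. ennreal (Ruelle f \<omega>) \<partial>mu)"
  proof (rule nn_integral_cong)
    fix w
    have a: "0 \<le> f (prepend True w)" "0 \<le> f (prepend False w)" using nn by auto
    have "(\<integral>\<^sup>+s. ennreal (f (prepend s w)) \<partial>BB) = ennreal (f (prepend True w)) * ennreal (1/2) + ennreal (f (prepend False w)) * ennreal (1 - 1/2)"
      by simp
    also have "\<dots> = ennreal (f (prepend True w) * (1/2) + f (prepend False w) * (1/2))"
    proof -
      have h: "(1::real) - 1/2 = 1/2" by simp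
      have "ennreal (f (prepend True w) * (1/2) + f (prepend False w) * (1/2)) =
            ennreal (f (prepend True w) * (1/2)) + ennreal (f (prepend False w) * (1/2))"
        using a by (intro ennreal_plus) auto
      also have "\<dots> = ennreal (f (prepend True w)) * ennreal (1/2) + ennreal (f (prepend False w)) * ennreal (1/2)"
        using a by (simp only: ennreal_mult)
      finally show ?thesis by (simp only: h)
    qed
    also have "\<dots> = ennreal (Ruelle f w)" by (simp add: Ruelle_def field_simps)
    finally show "(\<integral>\<^sup>+s. ennreal (f (prepend s w)) \<partial>BB) = ennreal (Ruelle f w)" .
  qed
  finally show ?thesis by simp
qed

lemma Kpow_apply: "(Koopman ^^ k) f x = f ((shift ^^ k) x)"
  by (induction k arbitrary: f x) (simp_all add: Koopman_def funpow_swap1)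

lemma Kpow_meas: "f \<in> borel_measurable mu \<Longrightarrow> (Koopman ^^ k) f \<in> borel_measurable mu"
  by (induction k) (simp_all add: Koopman_meas)

lemma Rpow_meas: "f \<in> borel_measurable mu \<Longrightarrow> (Ruelle ^^ k) f \<in> borel_measurable mu"
  by (induction k) (simp_all add: Ruelle_meas)

lemma Ruelle_nonneg: "(\<And>x. 0 \<le> f x) \<Longrightarrow> 0 \<le> Ruelle f x"
  by (simp add: Ruelle_def add_nonneg_nonneg)

lemma Rpow_nonneg: "(\<And>x. 0 \<le> f x) \<Longrightarrow> 0 \<le> (Ruelle ^^ k) f x"
  by (induction k arbitrary: x) (simp_all add: Ruelle_nonneg)

lemma nn_Kpow: "f \<in> borel_measurable mu \<Longrightarrow>
   (\<integral>\<^sup>+x. ennreal ((Koopman ^^ k) f x) \<partial>mu) = (\<integral>\<^sup>+x. ennreal (f x) \<partial>mu)"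
  by (induction k) (simp_all add: nn_Koopman Kpow_meas)

lemma nn_Rpow: "f \<in> borel_measurable mu \<Longrightarrow> (\<And>x. 0 \<le> f x) \<Longrightarrow>
   (\<integral>\<^sup>+x. ennreal ((Ruelle ^^ k) f x) \<partial>mu) = (\<integral>\<^sup>+x. ennreal (f x) \<partial>mu)"
  by (induction k) (simp_all add: nn_Ruelle Rpow_meas Rpow_nonneg)

lemma Ruelle_mono: "(\<And>x. f x \<le> g x) \<Longrightarrow> Ruelle f x \<le> Ruelle g x"
  by (simp add: Ruelle_def add_mono divide_right_mono)

lemma Ruelle_jensen: "(Ruelle f x)\<^sup>2 \<le> Ruelle (\<lambda>y. (f y)\<^sup>2) x"
proof -
  have "((a + b)/2)\<^sup>2 \<le> (a\<^sup>2 + b\<^sup>2)/2" for a b :: real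
  proof -
    have "0 \<le> (a - b)\<^sup>2" by simp
    then show ?thesis by (simp add: power2_eq_square field_simps)
  qed
  then show ?thesis by (simp add: Ruelle_def)
qed

lemma Rpow_jensen: "((Ruelle ^^ k) f x)\<^sup>2 \<le> (Ruelle ^^ k) (\<lambda>y. (f y)\<^sup>2) x"
proof (induction k arbitrary: x)
  case 0 then show ?case by simp
next
  case (Suc k)
  have "((Ruelle ^^ Suc k) f x)\<^sup>2 \<le> Ruelle (\<lambda>y. ((Ruelle ^^ k) f y)\<^sup>2) x"
    by (simp add: Ruelle_jensen)
  also have "\<dots> \<le> Ruelle ((Ruelle ^^ k) (\<lambda>y. (f y)\<^sup>2)) x"
    by (rule Ruelle_mono) (rule Suc.IH)
  finally show ?case by simp
qed

lemma key: "(h y - Koopman (Ruelle h) y)\<^sup>2 \<le> Koopman (Ruelle (\<lambda>z. (h z)\<^sup>2)) y"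
proof -
  have e: "h y = h (prepend (y 0) (shift y))" by (simp add: prepend_shift)
  have ineq: "(a - (a + b)/2)\<^sup>2 \<le> (a\<^sup>2 + b\<^sup>2)/2" "(b - (a + b)/2)\<^sup>2 \<le> (a\<^sup>2 + b\<^sup>2)/2" for a b :: real
  proof -
    have "0 \<le> (a + b)\<^sup>2" by simp
    then show "(a - (a + b)/2)\<^sup>2 \<le> (a\<^sup>2 + b\<^sup>2)/2" "(b - (a + b)/2)\<^sup>2 \<le> (a\<^sup>2 + b\<^sup>2)/2"
      by (simp_all add: power2_eq_square field_simps)
  qed
  show ?thesis
    unfolding Koopman_def Ruelle_def o_def e
    by (cases "y 0") (use ineq in auto)
qed

lemma RK[simp]: "Ruelle (Koopman f) = f"
  by (simp add: Ruelle_def Koopman_def fun_eq_iff)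

lemma bound:
  assumes phim: "phi \<in> borel_measurable mu" and phii: "integrable mu (\<lambda>x. (phi x)\<^sup>2)"
    and c: "c \<in> borel_measurable mu"
    and le: "\<And>x. (c x)\<^sup>2 \<le> (Koopman ^^ j) (Ruelle (\<lambda>y. ((Ruelle ^^ k) phi y)\<^sup>2)) x"
  shows "(\<integral>x. (c x)\<^sup>2 \<partial>mu) \<le> (\<integral>x. (phi x)\<^sup>2 \<partial>mu)"
proof -
  let ?F = "(Koopman ^^ j) (Ruelle ((Ruelle ^^ k) (\<lambda>y. (phi y)\<^sup>2)))"
  have sqm: "(\<lambda>y. (phi y)\<^sup>2) \<in> borel_measurable mu"
    using phii by (rule borel_measurable_integrable)
  have le2: "(c x)\<^sup>2 \<le> ?F x" for x
  proof -
    have "(c x)\<^sup>2 \<le> Ruelle (\<lambda>y. ((Ruelle ^^ k) phi y)\<^sup>2) ((shift ^^ j) x)"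
      using le[of x] by (simp add: Kpow_apply)
    also have "\<dots> \<le> Ruelle ((Ruelle ^^ k) (\<lambda>y. (phi y)\<^sup>2)) ((shift ^^ j) x)"
      by (rule Ruelle_mono) (rule Rpow_jensen)
    finally show ?thesis by (simp add: Kpow_apply)
  qed
  have "(\<integral>\<^sup>+x. ennreal ((c x)\<^sup>2) \<partial>mu) \<le> (\<integral>\<^sup>+x. ennreal (?F x) \<partial>mu)"
    by (intro nn_integral_mono) (simp add: le2 ennreal_leI)
  also have "\<dots> = (\<integral>\<^sup>+x. ennreal ((phi x)\<^sup>2) \<partial>mu)"
    using sqm by (simp add: nn_Kpow nn_Ruelle nn_Rpow Ruelle_meas Rpow_meas Rpow_nonneg)
  finally have N: "(\<integral>\<^sup>+x. ennreal ((c x)\<^sup>2) \<partial>mu) \<le> (\<integral>\<^sup>+x. ennreal ((phi x)\<^sup>2) \<partial>mu)" .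
  have fin: "(\<integral>\<^sup>+x. ennreal ((phi x)\<^sup>2) \<partial>mu) < \<infinity>"
    using integrableD(2)[OF phii] by (simp add: top.not_eq_extremum)
  have "(\<integral>x. (c x)\<^sup>2 \<partial>mu) = enn2real (\<integral>\<^sup>+x. ennreal ((c x)\<^sup>2) \<partial>mu)"
    using c by (intro integral_eq_nn_integral) auto
  also have "\<dots> \<le> enn2real (\<integral>\<^sup>+x. ennreal ((phi x)\<^sup>2) \<partial>mu)"
    using N fin by (intro enn2real_mono) auto
  also have "\<dots> = (\<integral>x. (phi x)\<^sup>2 \<partial>mu)"
    using sqm by (intro integral_eq_nn_integral[symmetric]) auto
  finally show ?thesis .
qed

lemma sqL2: "(L2norm f)\<^sup>2 = (\<integral>x. (f x)\<^sup>2 \<partial>mu)"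
  unfolding L2norm_def by (simp add: integral_nonneg_AE)

lemma c1_le:
  "(Koopman (((Koopman ^^ Suc m) \<circ> (Ruelle ^^ Suc m)) f) x - ((Koopman ^^ Suc m) \<circ> (Ruelle ^^ Suc m)) (Koopman f) x)\<^sup>2
   \<le> (Koopman ^^ Suc (Suc m)) (Ruelle (\<lambda>y. ((Ruelle ^^ m) f y)\<^sup>2)) x"
proof -
  let ?g = "(Ruelle ^^ m) f"
  let ?y = "(shift ^^ Suc m) x"
  have e1: "Koopman (((Koopman ^^ Suc m) \<circ> (Ruelle ^^ Suc m)) f) x = Koopman (Ruelle ?g) ?y"
    by (simp add: Kpow_apply Koopman_def funpow_swap1)
  have e2: "((Koopman ^^ Suc m) \<circ> (Ruelle ^^ Suc m)) (Koopman f) x = ?g ?y"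
  proof -
    have r: "(Ruelle ^^ Suc m) (Koopman f) = (Ruelle ^^ m) f" by (simp only: funpow_Suc_right o_def RK)
    show ?thesis by (simp only: o_def Kpow_apply r)
  qed
  have "(Koopman (Ruelle ?g) ?y - ?g ?y)\<^sup>2 = (?g ?y - Koopman (Ruelle ?g) ?y)\<^sup>2"
    by (simp add: power2_commute)
  also have "\<dots> \<le> Koopman (Ruelle (\<lambda>z. (?g z)\<^sup>2)) ?y" by (rule key)
  also have "\<dots> = (Koopman ^^ Suc (Suc m)) (Ruelle (\<lambda>y. ((Ruelle ^^ m) f y)\<^sup>2)) x"
    by (simp only: Kpow_apply) (simp only: funpow.simps(2) o_def Koopman_def)
  finally show ?thesis by (simp only: e1 e2)
qed

lemma c2_le:
  "(Ruelle (((Koopman ^^ Suc m) \<circ> (Ruelle ^^ Suc m)) f) x - ((Koopman ^^ Suc m) \<circ> (Ruelle ^^ Suc m)) (Ruelle f) x)\<^sup>2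
   \<le> (Koopman ^^ Suc m) (Ruelle (\<lambda>y. ((Ruelle ^^ Suc m) f y)\<^sup>2)) x"
proof -
  let ?h = "(Ruelle ^^ Suc m) f"
  let ?y = "(shift ^^ m) x"
  have e1: "Ruelle (((Koopman ^^ Suc m) \<circ> (Ruelle ^^ Suc m)) f) x = ?h ?y"
  proof -
    have k: "(Koopman ^^ Suc m) ?h = Koopman ((Koopman^^m) ?h)" by simp
    show ?thesis by (simp only: o_def k RK Kpow_apply)
  qed
  have e2: "((Koopman ^^ Suc m) \<circ> (Ruelle ^^ Suc m)) (Ruelle f) x = Koopman (Ruelle ?h) ?y"
  proof -
    have r2: "(Ruelle ^^ Suc m) (Ruelle f) = Ruelle ?h" by (rule funpow_swap1[symmetric])
    show ?thesis by (simp only: o_def r2 Kpow_apply) (simp only: funpow.simps(2) o_def Koopman_def)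
  qed
  have "(?h ?y - Koopman (Ruelle ?h) ?y)\<^sup>2 \<le> Koopman (Ruelle (\<lambda>z. (?h z)\<^sup>2)) ?y" by (rule key)
  also have "\<dots> = (Koopman ^^ Suc m) (Ruelle (\<lambda>y. ((Ruelle ^^ Suc m) f y)\<^sup>2)) x"
    by (simp only: Kpow_apply) (simp only: funpow.simps(2) o_def Koopman_def)
  finally show ?thesis by (simp only: e1 e2)
qed

lemma upper:
  assumes s1: "sq_int (fst p)" and s2: "sq_int (snd p)" and h: "Hnorm p \<le> 1"
  shows "Hnorm (commutator Dirac (piop ((Koopman ^^ Suc m) \<circ> (Ruelle ^^ Suc m))) p) \<le> 1"
proof -
  obtain f1 f2 where p: "p = (f1, f2)" by (cases p)
  let ?P = "(Koopman ^^ Suc m) \<circ> (Ruelle ^^ Suc m)"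
  define c1 where "c1 = (\<lambda>x. Koopman (?P f2) x - ?P (Koopman f2) x)"
  define c2 where "c2 = (\<lambda>x. Ruelle (?P f1) x - ?P (Ruelle f1) x)"
  have f1m: "f1 \<in> borel_measurable mu" and f1i: "integrable mu (\<lambda>x. (f1 x)\<^sup>2)"
    using s1 p by (auto simp: sq_int_def)
  have f2m: "f2 \<in> borel_measurable mu" and f2i: "integrable mu (\<lambda>x. (f2 x)\<^sup>2)"
    using s2 p by (auto simp: sq_int_def)
  have com: "commutator Dirac (piop ?P) p = (c1, c2)"
    by (simp add: p commutator_def Dirac_def piop_def c1_def c2_def)
  have c1m: "c1 \<in> borel_measurable mu"
    unfolding c1_def o_def
    by (intro borel_measurable_diff Koopman_meas Kpow_meas Rpow_meas f2m)
  have c2m: "c2 \<in> borel_measurable mu"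
    unfolding c2_def o_def
    by (intro borel_measurable_diff Ruelle_meas Kpow_meas Rpow_meas f1m)
  have b1: "(\<integral>x. (c1 x)\<^sup>2 \<partial>mu) \<le> (\<integral>x. (f2 x)\<^sup>2 \<partial>mu)"
    by (rule bound[OF f2m f2i c1m]) (unfold c1_def, rule c1_le)
  have b2: "(\<integral>x. (c2 x)\<^sup>2 \<partial>mu) \<le> (\<integral>x. (f1 x)\<^sup>2 \<partial>mu)"
    by (rule bound[OF f1m f1i c2m]) (unfold c2_def, rule c2_le)
  have "Hnorm (c1, c2) = sqrt ((\<integral>x. (c1 x)\<^sup>2 \<partial>mu) + (\<integral>x. (c2 x)\<^sup>2 \<partial>mu))"
    by (simp add: Hnorm_def sqL2)
  also have "\<dots> \<le> sqrt ((\<integral>x. (f1 x)\<^sup>2 \<partial>mu) + (\<integral>x. (f2 x)\<^sup>2 \<partial>mu))"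
    using b1 b2 by simp
  also have "\<dots> = Hnorm p" by (simp add: Hnorm_def sqL2 p)
  finally show ?thesis using h com by simp
qed

definition rr :: "nat \<Rightarrow> fn" where "rr j = (\<lambda>x. if x j then 1 else -1)"

lemma R_rr: "Ruelle (rr (Suc j)) = rr j"
  by (simp add: Ruelle_def rr_def prepend_def fun_eq_iff)

lemma R_rr0: "Ruelle (rr 0) = (\<lambda>_. 0)"
  by (simp add: Ruelle_def rr_def prepend_def fun_eq_iff)

lemma Rpow_rr: "(Ruelle ^^ k) (rr (j + k)) = rr j"
  by (induction k arbitrary: j) (simp_all add: funpow_Suc_right R_rr del: funpow.simps)

lemma Rpow0: "(Ruelle ^^ k) (\<lambda>_. 0) = (\<lambda>_. 0)"
  by (induction k) (simp_all add: Ruelle_def)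

lemma Kpow0: "(Koopman ^^ k) (\<lambda>_. 0) = (\<lambda>_. 0)"
  by (induction k) (simp_all add: Koopman_def o_def)

lemma K_rr: "Koopman (rr j) = rr (Suc j)"
  by (simp add: Koopman_def rr_def shift_def fun_eq_iff)

lemma rr_sq: "(rr j x)\<^sup>2 = 1"
  by (simp add: rr_def)

lemma rr_meas: "rr j \<in> borel_measurable mu"
proof -
  have "(\<lambda>x. x j) \<in> measurable mu BB"
    unfolding mu_def by (rule measurable_component_singleton) simp
  then have "Measurable.pred mu (\<lambda>x. x j)" by (simp add: measurable_def)
  then show ?thesis unfolding rr_def by measurable
qed

lemma witness:
  "Hnorm (commutator Dirac (piop ((Koopman ^^ Suc m) \<circ> (Ruelle ^^ Suc m))) ((\<lambda>_. 0), rr m)) = 1"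
  "sq_int (\<lambda>_. 0)" "sq_int (rr m)" "Hnorm ((\<lambda>_. 0), rr m) = 1"
proof -
  interpret prob_space mu by (simp add: mu_def prob_space_PiM prob_space_measure_pmf)
  have R0: "Ruelle (\<lambda>_. 0) = (\<lambda>_. 0)" by (simp add: Ruelle_def)
  have K0: "Koopman (\<lambda>_. 0) = (\<lambda>_. 0)" by (simp add: Koopman_def o_def)
  have a: "(Ruelle ^^ Suc m) (rr m) = (\<lambda>_. 0)"
    using Rpow_rr[of m 0] by (simp add: R_rr0)
  have b: "(Ruelle ^^ Suc m) (rr (Suc m)) = rr 0"
    using Rpow_rr[of "Suc m" 0] by simp
  have c: "(Koopman ^^ k) (rr j) = rr (j + k)" for k j
    by (induction k) (simp_all add: K_rr)
  have com: "commutator Dirac (piop ((Koopman ^^ Suc m) \<circ> (Ruelle ^^ Suc m))) ((\<lambda>_. 0), rr m)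
     = ((\<lambda>x. - rr (Suc m) x), (\<lambda>_. 0))"
    by (simp add: commutator_def Dirac_def piop_def a b c K_rr R0 K0 Kpow0 Rpow0 del: funpow.simps)
  show "Hnorm (commutator Dirac (piop ((Koopman ^^ Suc m) \<circ> (Ruelle ^^ Suc m))) ((\<lambda>_. 0), rr m)) = 1"
    unfolding com by (simp add: Hnorm_def L2norm_def rr_sq prob_space)
  show "sq_int (\<lambda>_. 0)" by (simp add: sq_int_def)
  show "sq_int (rr m)" by (simp add: sq_int_def rr_sq rr_meas)
  show "Hnorm ((\<lambda>_. 0), rr m) = 1"
    by (simp add: Hnorm_def L2norm_def rr_sq prob_space)
qed

theorem theorem2p20:
  fixes n :: nat
  assumes "n \<ge> 1"
  shows "opnormH (commutator Dirac (piop ((Koopman ^^ n) \<circ> (Ruelle ^^ n)))) = 1"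
proof -
  obtain m where n: "n = Suc m" using assms by (cases n) auto
  show ?thesis
    unfolding opnormH_def n
  proof (rule cSup_eq_maximum)
    show "1 \<in> {Hnorm (commutator Dirac (piop ((Koopman ^^ Suc m) \<circ> (Ruelle ^^ Suc m))) p) |p.
          sq_int (fst p) \<and> sq_int (snd p) \<and> Hnorm p \<le> 1}"
      using witness(1)[of m] witness(2) witness(3)[of m] witness(4)[of m] by (intro CollectI exI[of _ "((\<lambda>_. 0), rr m)"]) auto
  next
    fix x assume "x \<in> {Hnorm (commutator Dirac (piop ((Koopman ^^ Suc m) \<circ> (Ruelle ^^ Suc m))) p) |p.
          sq_int (fst p) \<and> sq_int (snd p) \<and> Hnorm p \<le> 1}"
    then show "x \<le> 1" using upper by blast
  qed
qed

end
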